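(* Let $R$ be a commutative ring, $n\ge 5$ and $d\ge1$. The assignment $(\Delta,w)\mapsto F_{(\Delta,w)}$ is a bijection between the set of balanced $R$-weighted $(d-1)$-complexes on $[n-1]$ and the set of nonzero homogeneous elements of $\operatorname{Cox}(\overline{\mathcal{M}}_{0,n})$ of degree $d$ that are not divisible by any exceptional section $x_I$. Moreover, for every balancing $w$ of a fixed complex $\Delta$, the element $F_{(\Delta,w)}$ is homogeneous of class $D_\Delta$.
   Context: Setup: $[m]=\{1,\dots,m\}$. Fix a Kapranov–Hassett isomorphism $\overline{\mathcal M}_{0,n}\cong\operatorname{Bl}\mathbb P^{n-3}$ over $\operatorname{Spec}R$: the iterated blow-up of $\mathbb P^{n-3}$ at points $q_1,\dots,q_{n-1}$ in general linear position and then along strict transforms of linear spans of subsets of these points, in order of increasing dimension. Then $\operatorname{Pic}(\overline{\mathcal M}_{0,n})=\mathbb ZH\oplus\bigoplus_I\mathbb ZE_I$, the sum over $I\subseteq[n-1]$ with $1\le|I|\le n-4$, where $H$ is the pulled-back hyperplane class and $E_I$ the exceptional divisor over the span of $\{q_i:i\in I\}$; the degree of a class is its $H$-coefficient. Let $P=R[y_1,\dots,y_{n-1},(x_I)_I]$, graded by $\operatorname{Pic}$ via $[x_I]=E_I$, $[y_i]=H-\sum_{I\not\ni i}E_I$, and set $z_i=\prod_{I\ni i}x_I$. Then $\operatorname{Cox}(\overline{\mathcal M}_{0,n})=\bigoplus_D H^0(\overline{\mathcal M}_{0,n},D)$ is identified with the graded subring $R[(x_I^{\pm1})_I,(y_i/z_i-y_j/z_j)_{i,j}]\cap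 P$, where $x_I$ is the section defining $E_I$; the degree of a homogeneous element equals its total degree in the $y_i$. Complexes: a $k$-simplex on $A$ is a multiset of cardinality $k+1$ with entries in $A$; a $k$-complex is a finite set of distinct $k$-simplices; $\operatorname{mult}_a(\sigma)$ is the multiplicity of $a$ in $\sigma$. An $R$-weighted complex assigns a nonzero $w_\sigma\in R$ to each simplex. With $c(\sigma,S)=\prod_a\binom{\operatorname{mult}_a\sigma}{\operatorname{mult}_aS}$, a weighted $k$-complex is balanced in degree $j$ if $\sum_\sigma c(\sigma,S)w_\sigma=0$ for every multiset $S$ of cardinality $j$ with entries in $A$, and balanced if balanced in every degree $j\in\{0,\dots,k\}$ with $j\le k-1$... precisely: in every degree $0\le j\le k-1$. For a balanced weighted $(d-1)$-complex $(\Delta,w)$ on $[n-1]$, let $y_\sigma=\prod_iy_i^{\operatorname{mult}_i\sigma}$, $z_\sigma=\prod_iz_i^{\operatorname{mult}_i\sigma}$, $f=\sum_{\sigma\in\Delta}w_\sigma y_\sigma/z_\sigma$, and $F_{(\Delta,w)}=\big(\prod_I x_I^{a_I}\big)f$ with $a_I=\max_{\sigma\in\Delta}\sum_{i\in I}\operatorname{mult}_i(\sigma)$ (clearing denominators minimally). For any $(d-1)$-complex $\Delta$ on $[n-1]$, $D_\Delta=dH-\sum_I\big(d-\max_{\sigma\in\Delta}\sum_{i\in I}\operatorname{mult}_i(\sigma)\big)E_I$. *)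

theory Defs
  imports Main "HOL-Library.Poly_Mapping" "HOL-Library.Multiset"
begin

datatype var = Y nat | X "nat set"

text \<open>Laurent polynomials over R in the variables: finitely supported maps from
 integer exponent vectors to coefficients. P is the subring of elements whose
 exponents are all nonnegative.\<close>
type_synonym 'a lpoly = "(var \<Rightarrow>\<^sub>0 int) \<Rightarrow>\<^sub>0 'a"

definition validI :: "nat \<Rightarrow> nat set \<Rightarrow> bool" where
  "validI n I \<longleftrightarrow> I \<subseteq> {1..n-1} \<and> 1 \<le> card I \<and> card I \<le> n - 4"

definition validIs :: "nat \<Rightarrow> nat set set" where
  "validIs n = {I. validI n I}"

definition lmono :: "'a::comm_ring_1 \<Rightarrow> (var \<Rightarrow>\<^sub>0 int) \<Rightarrow> 'a lpoly" where
  "lmono c e = Poly_Mapping.single e c"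

definition xvar :: "nat set \<Rightarrow> 'a::comm_ring_1 lpoly" where
  "xvar I = lmono 1 (Poly_Mapping.single (X I) 1)"

definition xinv :: "nat set \<Rightarrow> 'a::comm_ring_1 lpoly" where
  "xinv I = lmono 1 (Poly_Mapping.single (X I) (-1))"

text \<open>exponent vector of z_i = prod over valid I containing i of x_I\<close>
definition zexp :: "nat \<Rightarrow> nat \<Rightarrow> (var \<Rightarrow>\<^sub>0 int)" where
  "zexp n i = (\<Sum>I\<in>{I\<in>validIs n. i \<in> I}. Poly_Mapping.single (X I) 1)"

definition yz :: "nat \<Rightarrow> nat \<Rightarrow> 'a::comm_ring_1 lpoly" where
  "yz n i = lmono 1 (Poly_Mapping.single (Y i) 1 - zexp n i)"

inductive_set cox_alg :: "nat \<Rightarrow> 'a::comm_ring_1 lpoly set" for n where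
  const: "lmono c 0 \<in> cox_alg n"
| xgen: "validI n I \<Longrightarrow> xvar I \<in> cox_alg n"
| xinvgen: "validI n I \<Longrightarrow> xinv I \<in> cox_alg n"
| ygen: "i \<in> {1..n-1} \<Longrightarrow> j \<in> {1..n-1} \<Longrightarrow> yz n i - yz n j \<in> cox_alg n"
| add: "F \<in> cox_alg n \<Longrightarrow> G \<in> cox_alg n \<Longrightarrow> F + G \<in> cox_alg n"
| mult: "F \<in> cox_alg n \<Longrightarrow> G \<in> cox_alg n \<Longrightarrow> F * G \<in> cox_alg n"

definition in_P :: "'a::comm_ring_1 lpoly \<Rightarrow> bool" where
  "in_P F \<longleftrightarrow> (\<forall>m\<in>Poly_Mapping.keys F. \<forall>v. 0 \<le> Poly_Mapping.lookup m v)"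

text \<open>Cox(M_0n) identified with cox_alg n intersected with P\<close>
definition Cox :: "nat \<Rightarrow> 'a::comm_ring_1 lpoly set" where
  "Cox n = {F \<in> cox_alg n. in_P F}"

text \<open>A Picard class  a H + sum_I b_I E_I  is encoded as (a, b) with b_I = 0 for invalid I.\<close>
type_synonym pic = "int \<times> (nat set \<Rightarrow> int)"

text \<open>class of a monomial prod y_i^{b_i} prod x_I^{c_I}, using [x_I] = E_I,
 [y_i] = H - sum_{I not containing i} E_I\<close>
definition pic_class :: "nat \<Rightarrow> (var \<Rightarrow>\<^sub>0 int) \<Rightarrow> pic" where
  "pic_class n m =
     ((\<Sum>i\<in>{1..n-1}. Poly_Mapping.lookup m (Y i)),
      (\<lambda>I. if validI n I then Poly_Mapping.lookup m (X I) - (\<Sum>i\<in>{1..n-1} - I. Poly_Mapping.lookup m (Y i)) else 0))"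

definition homogeneous_of_class :: "nat \<Rightarrow> pic \<Rightarrow> 'a::comm_ring_1 lpoly \<Rightarrow> bool" where
  "homogeneous_of_class n D F \<longleftrightarrow> (\<forall>m\<in>Poly_Mapping.keys F. pic_class n m = D)"

definition homogeneous_deg :: "nat \<Rightarrow> nat \<Rightarrow> 'a::comm_ring_1 lpoly \<Rightarrow> bool" where
  "homogeneous_deg n d F \<longleftrightarrow> (\<exists>D. homogeneous_of_class n D F \<and> fst D = int d)"

definition divisible_by_exceptional :: "nat \<Rightarrow> 'a::comm_ring_1 lpoly \<Rightarrow> bool" where
  "divisible_by_exceptional n F \<longleftrightarrow> (\<exists>I. validI n I \<and> (\<exists>G\<in>Cox n. F = xvar I * G))"

text \<open>An R-weighted (d-1)-complex on [n-1] is encoded by its weight function w: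
 the complex is the (finite, nonempty) support of w, whose elements are
 multisets of cardinality d with entries in [n-1]; weights are nonzero on it.\<close>
definition cplx :: "('a::zero) \<Rightarrow> (nat multiset \<Rightarrow> 'a) \<Rightarrow> nat multiset set" where
  "cplx z w = {\<sigma>. w \<sigma> \<noteq> z}"

abbreviation Cplx :: "(nat multiset \<Rightarrow> 'a::zero) \<Rightarrow> nat multiset set" where
  "Cplx w \<equiv> cplx 0 w"

definition weighted_complex :: "nat \<Rightarrow> nat \<Rightarrow> (nat multiset \<Rightarrow> 'a::comm_ring_1) \<Rightarrow> bool" where
  "weighted_complex n d w \<longleftrightarrow> finite (Cplx w) \<and> Cplx w \<noteq> {} \<and>
     (\<forall>\<sigma>\<in>Cplx w. size \<sigma> = d \<and> set_mset \<sigma> \<subseteq> {1..n-1})"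

definition cmult :: "nat \<Rightarrow> nat multiset \<Rightarrow> nat multiset \<Rightarrow> nat" where
  "cmult n \<sigma> S = (\<Prod>a\<in>{1..n-1}. count \<sigma> a choose count S a)"

definition balanced_in_degree :: "nat \<Rightarrow> (nat multiset \<Rightarrow> 'a::comm_ring_1) \<Rightarrow> nat \<Rightarrow> bool" where
  "balanced_in_degree n w j \<longleftrightarrow>
     (\<forall>S. size S = j \<and> set_mset S \<subseteq> {1..n-1} \<longrightarrow>
        (\<Sum>\<sigma>\<in>Cplx w. of_nat (cmult n \<sigma> S) * w \<sigma>) = 0)"

definition balanced_complex :: "nat \<Rightarrow> nat \<Rightarrow> (nat multiset \<Rightarrow> 'a::comm_ring_1) \<Rightarrow> bool" where
  "balanced_complex n d w \<longleftrightarrow> weighted_complex n d w \<and> (\<forall>j<d. balanced_in_degree n w j)"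

definition aI :: "nat multiset set \<Rightarrow> nat set \<Rightarrow> nat" where
  "aI \<Delta> I = Max ((\<lambda>\<sigma>. \<Sum>i\<in>I. count \<sigma> i) ` \<Delta>)"

definition yzexp :: "nat \<Rightarrow> nat multiset \<Rightarrow> (var \<Rightarrow>\<^sub>0 int)" where
  "yzexp n \<sigma> = (\<Sum>i\<in>{1..n-1}. Poly_Mapping.single (Y i) (int (count \<sigma> i)))
              - (\<Sum>I\<in>validIs n. Poly_Mapping.single (X I) (int (\<Sum>i\<in>I. count \<sigma> i)))"

definition Fcx :: "nat \<Rightarrow> (nat multiset \<Rightarrow> 'a::comm_ring_1) \<Rightarrow> 'a lpoly" where
  "Fcx n w = lmono 1 (\<Sum>I\<in>validIs n. Poly_Mapping.single (X I) (int (aI (Cplx w) I)))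
             * (\<Sum>\<sigma>\<in>Cplx w. lmono (w \<sigma>) (yzexp n \<sigma>))"

definition D_class :: "nat \<Rightarrow> nat \<Rightarrow> nat multiset set \<Rightarrow> pic" where
  "D_class n d \<Delta> = (int d, \<lambda>I. if validI n I then - (int d - int (aI \<Delta> I)) else 0)"

end

theory Submission
  imports Defs "HOL-Library.FuncSet"
begin



lemma lmono_mult: "lmono a e * lmono b f = lmono (a*b) (e+f)"
  by (simp add: lmono_def mult_single add.commute)

lemma lmono_add: "lmono a e + lmono b e = lmono (a+b) e"
  by (simp add: lmono_def single_add)

lemma lmono_zero[simp]: "lmono 0 e = 0"
  by (simp add: lmono_def)

lemma lmono_one: "lmono 1 0 = 1"
  by (simp add: lmono_def)

lemma lookup_lmono: "Poly_Mapping.lookup (lmono c e) m = (if m = e then c else 0)"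
  by (simp add: lmono_def lookup_single)

lemma keys_lmono: "Poly_Mapping.keys (lmono c e) \<subseteq> {e}"
  by (simp add: lmono_def)

lemma lpoly_expand: "F = (\<Sum>m\<in>Poly_Mapping.keys F. lmono (Poly_Mapping.lookup F m) m)"
proof (rule poly_mapping_eqI)
  fix k
  have "Poly_Mapping.lookup (\<Sum>m\<in>Poly_Mapping.keys F. lmono (Poly_Mapping.lookup F m) m) k = (\<Sum>m\<in>Poly_Mapping.keys F. if k = m then Poly_Mapping.lookup F m else 0)"
    by (simp add: lookup_sum lookup_lmono)
  also have "\<dots> = Poly_Mapping.lookup F k"
    by (simp add: in_keys_iff)
  finally show "Poly_Mapping.lookup F k = Poly_Mapping.lookup (\<Sum>m\<in>Poly_Mapping.keys F. lmono (Poly_Mapping.lookup F m) m) k" by simp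
qed

definition lin :: "((var \<Rightarrow>\<^sub>0 int) \<Rightarrow> 'a::comm_ring_1) \<Rightarrow> 'a lpoly \<Rightarrow> 'a" where
  "lin h F = (\<Sum>m\<in>Poly_Mapping.keys F. Poly_Mapping.lookup F m * h m)"

lemma lin_superset: "finite K \<Longrightarrow> Poly_Mapping.keys F \<subseteq> K \<Longrightarrow> lin h F = (\<Sum>m\<in>K. Poly_Mapping.lookup F m * h m)"
  unfolding lin_def by (rule sum.mono_neutral_left) (auto simp: in_keys_iff)

lemma lin_add: "lin h (F + G) = lin h F + lin h G"
proof -
  let ?K = "Poly_Mapping.keys F \<union> Poly_Mapping.keys G"
  have "lin h (F+G) = (\<Sum>m\<in>?K. Poly_Mapping.lookup (F+G) m * h m)"
    by (rule lin_superset) (auto dest: set_mp[OF keys_add])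
  moreover have "lin h F = (\<Sum>m\<in>?K. Poly_Mapping.lookup F m * h m)" by (rule lin_superset) auto
  moreover have "lin h G = (\<Sum>m\<in>?K. Poly_Mapping.lookup G m * h m)" by (rule lin_superset) auto
  ultimately show ?thesis by (simp add: lookup_add distrib_right sum.distrib)
qed

lemma lin_zero[simp]: "lin h 0 = 0" by (simp add: lin_def)

lemma lin_uminus: "lin h (- F) = - lin h F"
  by (simp add: lin_def sum_negf)

lemma lin_diff: "lin h (F - G) = lin h F - lin h G"
  using lin_add[of h F "-G"] by (simp add: lin_uminus)

lemma lin_lmono: "lin h (lmono c e) = c * h e"
proof -
  have "lin h (lmono c e) = (\<Sum>m\<in>{e}. Poly_Mapping.lookup (lmono c e) m * h m)"
    by (rule lin_superset) (auto simp: keys_lmono)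
  then show ?thesis by (simp add: lookup_lmono)
qed

lemma lin_sum: "lin h (\<Sum>x\<in>XS. F x) = (\<Sum>x\<in>XS. lin h (F x))"
  by (induction XS rule: infinite_finite_induct) (auto simp: lin_add)

lemma lin_cong: "(\<And>m. m \<in> Poly_Mapping.keys F \<Longrightarrow> h m = h' m) \<Longrightarrow> lin h F = lin h' F"
  by (simp add: lin_def)

lemma lin_hadd: "lin (\<lambda>m. h1 m + h2 m) F = lin h1 F + lin h2 F"
  by (simp add: lin_def distrib_left sum.distrib)

lemma lin_hdiff: "lin (\<lambda>m. h1 m - h2 m) F = lin h1 F - lin h2 F"
  by (simp add: lin_def right_diff_distrib sum_subtractf)

lemma lin_hif: "lin (\<lambda>m. if P then h m else 0) F = (if P then lin h F else 0)"
  by (simp add: lin_def)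

lemma lin_hconst: "lin (\<lambda>m. c * h m) F = c * lin h F"
  by (simp add: lin_def sum_distrib_left algebra_simps)

lemma lmono_mult_expand: "lmono c e * F = (\<Sum>m\<in>Poly_Mapping.keys F. lmono (c * Poly_Mapping.lookup F m) (e + m))"
proof -
  have "lmono c e * F = lmono c e * (\<Sum>m\<in>Poly_Mapping.keys F. lmono (Poly_Mapping.lookup F m) m)"
    by (subst lpoly_expand[of F]) simp
  also have "\<dots> = (\<Sum>m\<in>Poly_Mapping.keys F. lmono (c * Poly_Mapping.lookup F m) (e + m))"
    by (simp add: sum_distrib_left lmono_mult)
  finally show ?thesis .
qed

lemma lin_lmono_mult: "lin h (lmono c e * F) = c * lin (\<lambda>m. h (e + m)) F"
proof -
  have "lin h (lmono c e * F) = (\<Sum>m\<in>Poly_Mapping.keys F. lin h (lmono (c * Poly_Mapping.lookup F m) (e + m)))"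
    by (subst lmono_mult_expand) (rule lin_sum)
  then show ?thesis by (simp only: lin_lmono) (simp add: lin_def sum_distrib_left mult.assoc)
qed

lemma keys_lmono_mult: "Poly_Mapping.keys (lmono c e * F) \<subseteq> (\<lambda>m. e + m) ` Poly_Mapping.keys F"
proof -
  have "Poly_Mapping.keys (lmono c e * F) \<subseteq> (\<Union>m\<in>Poly_Mapping.keys F. Poly_Mapping.keys (lmono (c * Poly_Mapping.lookup F m) (e + m)))"
    by (subst lmono_mult_expand) (rule keys_sum)
  also have "\<dots> \<subseteq> (\<lambda>m. e + m) ` Poly_Mapping.keys F" using keys_lmono by fastforce
  finally show ?thesis .
qed

lemma lin_ind: "lin (\<lambda>m. if m = m0 then 1 else 0) F = Poly_Mapping.lookup F m0"
proof -
  have "lin (\<lambda>m. if m = m0 then 1 else 0) F = (\<Sum>m\<in>Poly_Mapping.keys F \<union> {m0}. Poly_Mapping.lookup F m * (if m = m0 then 1 else 0))"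
    by (rule lin_superset) auto
  also have "\<dots> = (\<Sum>m\<in>Poly_Mapping.keys F \<union> {m0}. if m = m0 then Poly_Mapping.lookup F m else 0)"
    by (rule sum.cong) auto
  also have "\<dots> = Poly_Mapping.lookup F m0" by (simp add: sum.delta')
  finally show ?thesis .
qed

lemma lmono_prod: "(\<Prod>i\<in>A. lmono (c i) (e i)) = lmono (\<Prod>i\<in>A. c i) (\<Sum>i\<in>A. e i)"
  by (induction A rule: infinite_finite_induct) (auto simp: lmono_one lmono_mult)

lemma lmono_power: "lmono c e ^ k = lmono (c ^ k) (\<Sum>j<k. e)"
  by (induction k) (auto simp: lmono_one lmono_mult add.commute)

lemma lmono_const_mult: "lmono a 0 * lmono b e = lmono (a*b) e"
  by (simp add: lmono_mult)

lemma lmono_sum_coeff: "(\<Sum>x\<in>XS. lmono (c x) e) = lmono (\<Sum>x\<in>XS. c x) e"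
  by (induction XS rule: infinite_finite_induct) (auto simp: lmono_add)

lemma lmono_diff_coeff: "lmono a e - lmono b e = lmono (a-b) e"
  by (simp add: lmono_def single_diff)




abbreviation lk :: "(var \<Rightarrow>\<^sub>0 int) \<Rightarrow> var \<Rightarrow> int" where "lk \<equiv> Poly_Mapping.lookup"

lemma finite_validIs: "finite (validIs n)"
proof -
  have "validIs n \<subseteq> Pow {1..n-1}" by (auto simp: validIs_def validI_def)
  then show ?thesis by (rule finite_subset) simp
qed

lemma validI_sub: "validI n I \<Longrightarrow> I \<subseteq> {1..n-1}" by (simp add: validI_def)
lemma validI_fin: "validI n I \<Longrightarrow> finite I" by (meson finite_atLeastAtMost finite_subset validI_sub)

lemma lk_single: "lk (Poly_Mapping.single k v) k' = (if k = k' then v else 0)"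
  by (simp add: lookup_single)

lemma lk_zexp_Y[simp]: "lk (zexp n i) (Y a) = 0"
  by (simp add: zexp_def lookup_sum lk_single)

lemma lk_zexp_X[simp]: "lk (zexp n i) (X J) = (if validI n J \<and> i \<in> J then 1 else 0)"
proof -
  have "lk (zexp n i) (X J) = (\<Sum>I\<in>{I\<in>validIs n. i \<in> I}. if J = I then 1 else 0)"
    by (simp add: zexp_def lookup_sum lk_single)
  also have "\<dots> = (if J \<in> {I\<in>validIs n. i \<in> I} then 1 else 0)"
    using finite_validIs[of n] by (simp add: sum.delta')
  finally show ?thesis by (simp add: validIs_def)
qed

inductive_set gspan :: "nat \<Rightarrow> 'a::comm_ring_1 lpoly set" for n where
  one: "1 \<in> gspan n"
| add: "F \<in> gspan n \<Longrightarrow> G \<in> gspan n \<Longrightarrow> F + G \<in> gspan n"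
| cmul: "F \<in> gspan n \<Longrightarrow> lmono c 0 * F \<in> gspan n"
| xmul: "validI n I \<Longrightarrow> F \<in> gspan n \<Longrightarrow> xvar I * F \<in> gspan n"
| xinvmul: "validI n I \<Longrightarrow> F \<in> gspan n \<Longrightarrow> xinv I * F \<in> gspan n"
| ymul: "i \<in> {1..n-1} \<Longrightarrow> j \<in> {1..n-1} \<Longrightarrow> F \<in> gspan n \<Longrightarrow> (yz n i - yz n j) * F \<in> gspan n"

lemma gspan_mult: "F \<in> gspan n \<Longrightarrow> G \<in> gspan n \<Longrightarrow> F * G \<in> gspan n"
proof (induction F rule: gspan.induct)
  case one then show ?case by simp
next
  case (add F1 F2) then show ?case by (simp add: distrib_right gspan.add)
next
  case (cmul F c) then show ?case by (simp add: mult.assoc gspan.cmul)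
next
  case (xmul I F) then show ?case by (simp add: mult.assoc gspan.xmul)
next
  case (xinvmul I F) then show ?case by (simp add: mult.assoc gspan.xinvmul)
next
  case (ymul i j F) then show ?case by (simp add: mult.assoc gspan.ymul)
qed

lemma cox_gspan: "F \<in> cox_alg n \<Longrightarrow> F \<in> gspan n"
proof (induction F rule: cox_alg.induct)
  case (const c)
  have "lmono c 0 * 1 \<in> gspan n" by (rule gspan.cmul[OF gspan.one])
  then show ?case by simp
next
  case (xgen I)
  have "xvar I * 1 \<in> gspan n" by (rule gspan.xmul[OF xgen gspan.one])
  then show ?case by simp
next
  case (xinvgen I)
  have "xinv I * 1 \<in> gspan n" by (rule gspan.xinvmul[OF xinvgen gspan.one])
  then show ?case by simp
next
  case (ygen i j)
  have "(yz n i - yz n j) * 1 \<in> gspan n" by (rule gspan.ymul[OF ygen gspan.one])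
  then show ?case by simp
next
  case (add F G) then show ?case using gspan.add by blast
next
  case (mult F G) then show ?case using gspan_mult by blast
qed

definition shape :: "nat \<Rightarrow> (var \<Rightarrow>\<^sub>0 int) \<Rightarrow> bool" where
  "shape n m \<longleftrightarrow> (\<forall>i. 0 \<le> lk m (Y i) \<and> (i \<notin> {1..n-1} \<longrightarrow> lk m (Y i) = 0)) \<and>
                  (\<forall>I. \<not> validI n I \<longrightarrow> lk m (X I) = 0)"

definition cvec :: "nat \<Rightarrow> (var \<Rightarrow>\<^sub>0 int) \<Rightarrow> nat set \<Rightarrow> int" where
  "cvec n m = (\<lambda>I. if validI n I then lk m (X I) + (\<Sum>i\<in>I. lk m (Y i)) else 0)"

definition ysum :: "nat \<Rightarrow> (var \<Rightarrow>\<^sub>0 int) \<Rightarrow> int" where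
  "ysum n m = (\<Sum>i\<in>{1..n-1}. lk m (Y i))"

definition hB :: "nat \<Rightarrow> (nat set \<Rightarrow> int) \<Rightarrow> nat multiset \<Rightarrow> nat \<Rightarrow> (var \<Rightarrow>\<^sub>0 int) \<Rightarrow> 'a::comm_ring_1" where
  "hB n c S k m = (if cvec n m = c \<and> ysum n m = int (size S) + int k
      then of_nat (\<Prod>a\<in>{1..n-1}. nat (lk m (Y a)) choose count S a) else 0)"

definition good :: "nat \<Rightarrow> 'a::comm_ring_1 lpoly \<Rightarrow> bool" where
  "good n F \<longleftrightarrow> (\<forall>m\<in>Poly_Mapping.keys F. shape n m) \<and>
     (\<forall>c S k. 1 \<le> k \<longrightarrow> lin (hB n c S k) F = (0::'a))"

lemma shape_add: "shape n e \<Longrightarrow> shape n m \<Longrightarrow> shape n (e + m)"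
  by (simp add: shape_def lookup_add)

lemma cvec_add: "cvec n (e + m) = (\<lambda>I. cvec n e I + cvec n m I)"
  by (auto simp: cvec_def lookup_add sum.distrib)

lemma ysum_add: "ysum n (e + m) = ysum n e + ysum n m"
  by (simp add: ysum_def lookup_add sum.distrib)

lemma hB_xshift:
  assumes "\<And>i. lk e (Y i) = 0"
  shows "hB n c S k (e + m) = hB n (\<lambda>J. c J - cvec n e J) S k m"
proof -
  have "ysum n e = 0" using assms by (simp add: ysum_def)
  then have ys: "ysum n (e + m) = ysum n m" by (simp add: ysum_add)
  have cv: "cvec n (e + m) = c \<longleftrightarrow> cvec n m = (\<lambda>J. c J - cvec n e J)"
    by (auto simp: cvec_add fun_eq_iff algebra_simps)
  have pr: "\<And>a. lk (e + m) (Y a) = lk m (Y a)" using assms by (simp add: lookup_add)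
  show ?thesis unfolding hB_def ys cv pr ..
qed

definition ea :: "nat \<Rightarrow> nat \<Rightarrow> var \<Rightarrow>\<^sub>0 int" where
  "ea n i = Poly_Mapping.single (Y i) 1 - zexp n i"

lemma lk_ea_Y[simp]: "lk (ea n i) (Y a) = (if i = a then 1 else 0)"
  by (simp add: ea_def lookup_minus lk_single)

lemma lk_ea_X[simp]: "lk (ea n i) (X J) = (if validI n J \<and> i \<in> J then -1 else 0)"
  by (simp add: ea_def lookup_minus lk_single)

lemma cvec_ea: "cvec n (ea n i) = (\<lambda>J. 0)"
proof
  fix J
  show "cvec n (ea n i) J = 0"
  proof (cases "validI n J")
    case True
    then have "finite J" by (rule validI_fin)
    then have "(\<Sum>a\<in>J. lk (ea n i) (Y a)) = (if i \<in> J then 1 else 0)"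
      by (simp add: sum.delta)
    then show ?thesis using True by (simp add: cvec_def)
  qed (simp add: cvec_def)
qed

lemma ysum_ea: "i \<in> {1..n-1} \<Longrightarrow> ysum n (ea n i) = 1"
  by (simp add: ysum_def sum.delta)

lemma shape_ea: "i \<in> {1..n-1} \<Longrightarrow> shape n (ea n i)"
  by (auto simp: shape_def)

lemma pascal_prod:
  fixes f s :: "nat \<Rightarrow> nat"
  assumes "finite A" "i \<in> A"
  shows "(\<Prod>a\<in>A. (f a + (if a = i then 1 else 0)) choose s a) =
         (\<Prod>a\<in>A. f a choose s a) + (if 0 < s i then (\<Prod>a\<in>A. f a choose (if a = i then s a - 1 else s a)) else 0)"
proof -
  have r: "\<And>g. (\<Prod>a\<in>A. g a) = g i * (\<Prod>a\<in>A - {i}. g a)"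
    using assms by (simp add: prod.remove)
  have eq1: "(\<Prod>a\<in>A - {i}. (f a + (if a = i then 1 else 0)) choose s a) = (\<Prod>a\<in>A - {i}. f a choose s a)"
    by (rule prod.cong) auto
  have eq2: "(\<Prod>a\<in>A - {i}. f a choose (if a = i then s a - 1 else s a)) = (\<Prod>a\<in>A - {i}. f a choose s a)"
    by (rule prod.cong) auto
  have pas: "(f i + 1) choose s i = (f i choose s i) + (if 0 < s i then f i choose (s i - 1) else 0)"
  proof (cases "s i")
    case 0 then show ?thesis by simp
  next
    case (Suc t) then show ?thesis by simp
  qed
  have l1: "(\<Prod>a\<in>A. (f a + (if a = i then 1 else 0)) choose s a) = ((f i + 1) choose s i) * (\<Prod>a\<in>A - {i}. f a choose s a)"
    using r[of "\<lambda>a. (f a + (if a = i then 1 else 0)) choose s a"] eq1 by simp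
  have l2: "(\<Prod>a\<in>A. f a choose s a) = (f i choose s i) * (\<Prod>a\<in>A - {i}. f a choose s a)"
    using r[of "\<lambda>a. f a choose s a"] by simp
  have l3: "(\<Prod>a\<in>A. f a choose (if a = i then s a - 1 else s a)) = (f i choose (s i - 1)) * (\<Prod>a\<in>A - {i}. f a choose s a)"
    using r[of "\<lambda>a. f a choose (if a = i then s a - 1 else s a)"] eq2 by simp
  show ?thesis unfolding l1 l2 l3 pas by (simp add: algebra_simps)
qed

lemma hB_y:
  assumes sh: "shape n m" and i: "i \<in> {1..n-1}" and k: "1 \<le> k"
  shows "hB n c S k (ea n i + m) = (hB n c S (k-1) m + (if i \<in># S then hB n c (S - {#i#}) k m else 0) :: 'a::comm_ring_1)"
proof -
  have cv: "cvec n (ea n i + m) = cvec n m" by (simp add: cvec_add cvec_ea)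
  have ys: "ysum n (ea n i + m) = ysum n m + 1" using i by (simp add: ysum_add ysum_ea)
  have lkY: "nat (lk (ea n i + m) (Y a)) = nat (lk m (Y a)) + (if a = i then 1 else 0)" for a
  proof -
    have "0 \<le> lk m (Y a)" using sh by (simp add: shape_def)
    then show ?thesis by (auto simp: lookup_add nat_add_distrib)
  qed
  let ?f = "\<lambda>a. nat (lk m (Y a))" and ?s = "\<lambda>a. count S a"
  have P: "(\<Prod>a\<in>{1..n-1}. nat (lk (ea n i + m) (Y a)) choose count S a) =
      (\<Prod>a\<in>{1..n-1}. ?f a choose ?s a) + (if 0 < ?s i then (\<Prod>a\<in>{1..n-1}. ?f a choose (if a = i then ?s a - 1 else ?s a)) else 0)"
    unfolding lkY by (rule pascal_prod) (use i in auto)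
  have cnt: "\<And>a. count (S - {#i#}) a = (if a = i then count S a - 1 else count S a)" by auto
  have sz: "int (size (S - {#i#})) = int (size S) - 1" if "i \<in># S"
  proof -
    have "size S = Suc (size (S - {#i#}))" using that by (metis insert_DiffM size_add_mset)
    then show ?thesis by simp
  qed
  show ?thesis
  proof (cases "i \<in># S")
    case True
    then have "0 < ?s i" by simp
    then show ?thesis using True k unfolding hB_def cv ys P cnt
      by (auto simp: sz of_nat_diff algebra_simps)
  next
    case False
    then have "\<not> 0 < ?s i" by simp
    then show ?thesis using False k unfolding hB_def cv ys P
      by (auto simp: of_nat_diff algebra_simps)
  qed
qed




lemma yz_ea: "yz n i = lmono 1 (ea n i)" by (simp add: yz_def ea_def)

lemma good_xshift:
  assumes g: "good n F" and Ye: "\<And>i. lk e (Y i) = 0" and she: "shape n e"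
  shows "good n (lmono 1 e * F)"
proof -
  have "\<forall>m\<in>Poly_Mapping.keys (lmono 1 e * F). shape n m"
    using keys_lmono_mult[of 1 e F] g she shape_add unfolding good_def by blast
  moreover have "lin (hB n c S k) (lmono 1 e * F) = 0" if "1 \<le> k" for c S k
  proof -
    have "lin (hB n c S k) (lmono 1 e * F) = lin (\<lambda>m. hB n c S k (e + m)) F"
      by (simp add: lin_lmono_mult)
    also have "\<dots> = lin (hB n (\<lambda>J. c J - cvec n e J) S k) F"
      by (simp add: hB_xshift[OF Ye])
    also have "\<dots> = 0" using g that unfolding good_def by blast
    finally show ?thesis .
  qed
  ultimately show ?thesis unfolding good_def by blast
qed

lemma good_gspan: "F \<in> gspan n \<Longrightarrow> good n F"
proof (induction F rule: gspan.induct)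
  case one
  have k: "Poly_Mapping.keys (1::'a lpoly) = {0}" by simp
  have "lin (hB n c S k) (1::'a lpoly) = 0" if "1 \<le> k" for c S k
  proof -
    have "lin (hB n c S k) (lmono (1::'a) 0) = hB n c S k 0" by (simp add: lin_lmono)
    also have "\<dots> = 0" using that by (simp add: hB_def ysum_def)
    finally show ?thesis by (simp add: lmono_one)
  qed
  moreover have "shape n 0" by (simp add: shape_def)
  ultimately show ?case unfolding good_def k by simp
next
  case (add F G)
  then show ?case unfolding good_def using keys_add[of F G] by (auto simp: lin_add)
next
  case (cmul F c)
  have "\<forall>m\<in>Poly_Mapping.keys (lmono c 0 * F). shape n m"
    using keys_lmono_mult[of c 0 F] cmul unfolding good_def by auto
  moreover have "lin (hB n c' S k) (lmono c 0 * F) = 0" if "1 \<le> k" for c' S k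
    using cmul that unfolding good_def by (simp add: lin_lmono_mult)
  ultimately show ?case unfolding good_def by blast
next
  case (xmul I F)
  have "good n (lmono 1 (Poly_Mapping.single (X I) 1) * F)"
    by (rule good_xshift[OF xmul.IH]) (use xmul.hyps in \<open>auto simp: lk_single shape_def\<close>)
  then show ?case by (simp add: xvar_def)
next
  case (xinvmul I F)
  have "good n (lmono 1 (Poly_Mapping.single (X I) (-1)) * F)"
    by (rule good_xshift[OF xinvmul.IH]) (use xinvmul.hyps in \<open>auto simp: lk_single shape_def\<close>)
  then show ?case by (simp add: xinv_def)
next
  case (ymul i j F)
  have sh: "\<forall>m\<in>Poly_Mapping.keys F. shape n m" and B0: "\<And>c S k. 1 \<le> k \<Longrightarrow> lin (hB n c S k) F = 0"
    using ymul.IH unfolding good_def by auto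
  have eq: "(yz n i - yz n j) * F = lmono 1 (ea n i) * F - lmono 1 (ea n j) * F"
    unfolding yz_ea by (rule left_diff_distrib)
  have "\<forall>m\<in>Poly_Mapping.keys ((yz n i - yz n j) * F). shape n m"
  proof
    fix m assume "m \<in> Poly_Mapping.keys ((yz n i - yz n j) * F)"
    then have "m \<in> Poly_Mapping.keys (lmono 1 (ea n i) * F) \<or> m \<in> Poly_Mapping.keys (lmono 1 (ea n j) * F)"
      using keys_diff[of "lmono 1 (ea n i) * F" "lmono 1 (ea n j) * F"] unfolding eq by blast
    then show "shape n m"
    proof
      assume "m \<in> Poly_Mapping.keys (lmono 1 (ea n i) * F)"
      then obtain m' where "m' \<in> Poly_Mapping.keys F" "m = ea n i + m'" using keys_lmono_mult[of 1 "ea n i" F] by blast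
      then show ?thesis using sh shape_ea[OF ymul.hyps(1)] shape_add by blast
    next
      assume "m \<in> Poly_Mapping.keys (lmono 1 (ea n j) * F)"
      then obtain m' where "m' \<in> Poly_Mapping.keys F" "m = ea n j + m'" using keys_lmono_mult[of 1 "ea n j" F] by blast
      then show ?thesis using sh shape_ea[OF ymul.hyps(2)] shape_add by blast
    qed
  qed
  moreover have "lin (hB n c S k) ((yz n i - yz n j) * F) = 0" if k: "1 \<le> k" for c S k
  proof -
    have one: "lin (hB n c S k) (lmono 1 (ea n t) * F) = lin (hB n c S (k-1)) F" if t: "t \<in> {1..n-1}" for t
    proof -
      have "lin (hB n c S k) (lmono 1 (ea n t) * F) = lin (\<lambda>m. hB n c S k (ea n t + m)) F"
        by (simp add: lin_lmono_mult)
      also have "\<dots> = lin (\<lambda>m. hB n c S (k-1) m + (if t \<in># S then hB n c (S - {#t#}) k m else 0)) F"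
        by (rule lin_cong) (simp add: sh hB_y[OF _ t k])
      also have "\<dots> = lin (hB n c S (k-1)) F + (if t \<in># S then lin (hB n c (S - {#t#}) k) F else 0)"
        by (simp only: lin_hadd lin_hif)
      also have "\<dots> = lin (hB n c S (k-1)) F" using B0[OF k] by simp
      finally show ?thesis .
    qed
    show ?thesis unfolding eq lin_diff one[OF ymul.hyps(1)] one[OF ymul.hyps(2)] by simp
  qed
  ultimately show ?case unfolding good_def by blast
qed




abbreviation AA :: "nat \<Rightarrow> nat set" where "AA n \<equiv> {1..n-1}"

lemma size_sum_count: "set_mset \<sigma> \<subseteq> A \<Longrightarrow> finite A \<Longrightarrow> size \<sigma> = (\<Sum>a\<in>A. count \<sigma> a)"
proof -
  assume a: "set_mset \<sigma> \<subseteq> A" "finite A"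
  have "size \<sigma> = (\<Sum>a\<in>set_mset \<sigma>. count \<sigma> a)" by (simp add: size_multiset_overloaded_eq)
  also have "\<dots> = (\<Sum>a\<in>A. count \<sigma> a)" by (rule sum.mono_neutral_left) (use a in \<open>auto simp: not_in_iff\<close>)
  finally show ?thesis .
qed

definition aexp :: "nat \<Rightarrow> (nat multiset \<Rightarrow> 'a::comm_ring_1) \<Rightarrow> var \<Rightarrow>\<^sub>0 int" where
  "aexp n w = (\<Sum>I\<in>validIs n. Poly_Mapping.single (X I) (int (aI (Cplx w) I)))"

lemma lk_sum_single_X: "lk (\<Sum>I\<in>validIs n. Poly_Mapping.single (X I) (f I)) v =
   (case v of Y a \<Rightarrow> 0 | X J \<Rightarrow> if validI n J then f J else 0)"
proof (cases v)
  case (Y a) then show ?thesis by (simp add: lookup_sum lk_single)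
next
  case (X J)
  have "lk (\<Sum>I\<in>validIs n. Poly_Mapping.single (X I) (f I)) v = (\<Sum>I\<in>validIs n. if J = I then f I else 0)"
    using X by (simp add: lookup_sum lk_single eq_commute[of J])
  also have "\<dots> = (if J \<in> validIs n then f J else 0)" using finite_validIs[of n] by (simp add: sum.delta')
  finally show ?thesis using X by (simp add: validIs_def)
qed

lemma lk_aexp_Y[simp]: "lk (aexp n w) (Y a) = 0"
  by (simp add: aexp_def lk_sum_single_X)
lemma lk_aexp_X[simp]: "lk (aexp n w) (X J) = (if validI n J then int (aI (Cplx w) J) else 0)"
  by (simp add: aexp_def lk_sum_single_X)

lemma lk_yzexp_Y[simp]: "lk (yzexp n \<sigma>) (Y a) = (if a \<in> AA n then int (count \<sigma> a) else 0)"
proof -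
  have "lk (yzexp n \<sigma>) (Y a) = (\<Sum>i\<in>AA n. if i = a then int (count \<sigma> i) else 0)"
    by (simp add: yzexp_def lookup_minus lookup_sum lk_single lk_sum_single_X[where f="\<lambda>I. int (\<Sum>i\<in>I. count \<sigma> i)", unfolded validIs_def])
  also have "\<dots> = (if a \<in> AA n then int (count \<sigma> a) else 0)" by (simp add: sum.delta')
  finally show ?thesis .
qed

lemma lk_yzexp_X[simp]: "lk (yzexp n \<sigma>) (X J) = (if validI n J then - int (\<Sum>i\<in>J. count \<sigma> i) else 0)"
proof -
  have "lk (yzexp n \<sigma>) (X J) = 0 - lk (\<Sum>I\<in>validIs n. Poly_Mapping.single (X I) (int (\<Sum>i\<in>I. count \<sigma> i))) (X J)"
    by (simp add: yzexp_def lookup_minus lookup_sum lk_single)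
  then show ?thesis by (simp add: lk_sum_single_X)
qed

definition Eexp :: "nat \<Rightarrow> (nat multiset \<Rightarrow> 'a::comm_ring_1) \<Rightarrow> nat multiset \<Rightarrow> var \<Rightarrow>\<^sub>0 int" where
  "Eexp n w \<sigma> = aexp n w + yzexp n \<sigma>"

lemma lk_Eexp_Y[simp]: "lk (Eexp n w \<sigma>) (Y a) = (if a \<in> AA n then int (count \<sigma> a) else 0)"
  by (simp add: Eexp_def lookup_add)
lemma lk_Eexp_X[simp]: "lk (Eexp n w \<sigma>) (X J) = (if validI n J then int (aI (Cplx w) J) - int (\<Sum>i\<in>J. count \<sigma> i) else 0)"
  by (simp add: Eexp_def lookup_add)

lemma Fcx_expand: "Fcx n w = (\<Sum>\<sigma>\<in>Cplx w. lmono (w \<sigma>) (Eexp n w \<sigma>))"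
  unfolding Fcx_def Eexp_def aexp_def[symmetric]
  by (simp add: sum_distrib_left lmono_mult)

lemma Eexp_inj:
  assumes "set_mset \<sigma> \<subseteq> AA n" "set_mset \<tau> \<subseteq> AA n" "Eexp n w \<sigma> = Eexp n w' \<tau>"
  shows "\<sigma> = \<tau>"
proof (rule multiset_eqI)
  fix a
  have "lk (Eexp n w \<sigma>) (Y a) = lk (Eexp n w' \<tau>) (Y a)" using assms(3) by simp
  then show "count \<sigma> a = count \<tau> a"
  proof (cases "a \<in> AA n")
    case False
    then have "a \<notin># \<sigma>" "a \<notin># \<tau>" using assms(1,2) by auto
    then show ?thesis by (simp add: not_in_iff)
  qed simp
qed

lemma wc_fin: "weighted_complex n d w \<Longrightarrow> finite (Cplx w)" by (simp add: weighted_complex_def)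
lemma wc_set: "weighted_complex n d w \<Longrightarrow> \<sigma> \<in> Cplx w \<Longrightarrow> set_mset \<sigma> \<subseteq> AA n" by (simp add: weighted_complex_def)
lemma wc_size: "weighted_complex n d w \<Longrightarrow> \<sigma> \<in> Cplx w \<Longrightarrow> size \<sigma> = d" by (simp add: weighted_complex_def)
lemma wc_sum: "weighted_complex n d w \<Longrightarrow> \<sigma> \<in> Cplx w \<Longrightarrow> (\<Sum>a\<in>AA n. count \<sigma> a) = d"
  using size_sum_count[of \<sigma> "AA n"] wc_set wc_size by fastforce

lemma lookup_Fcx:
  assumes wc: "weighted_complex n d w" and s0: "\<sigma>0 \<in> Cplx w"
  shows "Poly_Mapping.lookup (Fcx n w) (Eexp n w \<sigma>0) = w \<sigma>0"
proof -
  have "Poly_Mapping.lookup (Fcx n w) (Eexp n w \<sigma>0) = (\<Sum>\<sigma>\<in>Cplx w. if Eexp n w \<sigma> = Eexp n w \<sigma>0 then w \<sigma> else 0)"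
    by (simp add: Fcx_expand lookup_sum lookup_lmono eq_commute)
  also have "\<dots> = (\<Sum>\<sigma>\<in>Cplx w. if \<sigma> = \<sigma>0 then w \<sigma> else 0)"
  proof (rule sum.cong)
    fix \<sigma> assume s: "\<sigma> \<in> Cplx w"
    have "Eexp n w \<sigma> = Eexp n w \<sigma>0 \<longleftrightarrow> \<sigma> = \<sigma>0"
      using Eexp_inj[OF wc_set[OF wc s] wc_set[OF wc s0]] by blast
    then show "(if Eexp n w \<sigma> = Eexp n w \<sigma>0 then w \<sigma> else 0) = (if \<sigma> = \<sigma>0 then w \<sigma> else 0)" by simp
  qed simp
  also have "\<dots> = w \<sigma>0" using wc_fin[OF wc] s0 by simp
  finally show ?thesis .
qed

lemma keys_Fcx: "Poly_Mapping.keys (Fcx n w) \<subseteq> Eexp n w ` Cplx w"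
proof -
  have "Poly_Mapping.keys (Fcx n w) \<subseteq> (\<Union>\<sigma>\<in>Cplx w. Poly_Mapping.keys (lmono (w \<sigma>) (Eexp n w \<sigma>)))"
    unfolding Fcx_expand by (rule keys_sum)
  then show ?thesis using keys_lmono by fastforce
qed

lemma aI_ge: "finite \<Delta> \<Longrightarrow> \<sigma> \<in> \<Delta> \<Longrightarrow> (\<Sum>i\<in>I. count \<sigma> i) \<le> aI \<Delta> I"
  unfolding aI_def by (rule Max_ge) auto

lemma aI_attained: "finite \<Delta> \<Longrightarrow> \<Delta> \<noteq> {} \<Longrightarrow> \<exists>\<sigma>\<in>\<Delta>. (\<Sum>i\<in>I. count \<sigma> i) = aI \<Delta> I"
proof -
  assume "finite \<Delta>" "\<Delta> \<noteq> {}"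
  then have "aI \<Delta> I \<in> (\<lambda>\<sigma>. \<Sum>i\<in>I. count \<sigma> i) ` \<Delta>" unfolding aI_def by (intro Max_in) auto
  then show ?thesis by auto
qed

lemma homog_Fcx:
  assumes wc: "weighted_complex n d w"
  shows "homogeneous_of_class n (D_class n d (Cplx w)) (Fcx n w)"
  unfolding homogeneous_of_class_def
proof
  fix m assume "m \<in> Poly_Mapping.keys (Fcx n w)"
  then obtain \<sigma> where s: "\<sigma> \<in> Cplx w" and m: "m = Eexp n w \<sigma>" using keys_Fcx by blast
  have sd: "(\<Sum>a\<in>AA n. count \<sigma> a) = d" by (rule wc_sum[OF wc s])
  have "(\<Sum>i\<in>AA n. lk m (Y i)) = (\<Sum>i\<in>AA n. int (count \<sigma> i))" by (simp add: m)
  also have "\<dots> = int d" using sd by (metis of_nat_sum)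
  finally have "(\<Sum>i\<in>AA n. lk m (Y i)) = int d" .
  moreover have "lk m (X I) - (\<Sum>i\<in>AA n - I. lk m (Y i)) = - (int d - int (aI (Cplx w) I))" if v: "validI n I" for I
  proof -
    have sub: "I \<subseteq> AA n" by (rule validI_sub[OF v])
    have "(\<Sum>i\<in>AA n - I. lk m (Y i)) = int (\<Sum>i\<in>AA n - I. count \<sigma> i)" by (simp add: m)
    moreover have "(\<Sum>i\<in>AA n. count \<sigma> i) = (\<Sum>i\<in>I. count \<sigma> i) + (\<Sum>i\<in>AA n - I. count \<sigma> i)"
      using sub by (metis finite_atLeastAtMost sum.subset_diff add.commute)
    ultimately show ?thesis using sd v by (simp add: m flip: of_nat_sum)
  qed
  ultimately show "pic_class n m = D_class n d (Cplx w)"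
    unfolding pic_class_def D_class_def by auto
qed




definition Sp :: "nat \<Rightarrow> (nat \<Rightarrow> nat) \<Rightarrow> nat multiset" where
  "Sp n p = (\<Sum>i\<in>AA n. replicate_mset (p i) i)"

lemma count_Sp: "count (Sp n p) a = (if a \<in> AA n then p a else 0)"
  by (simp add: Sp_def count_sum sum.delta')

lemma size_Sp: "size (Sp n p) = (\<Sum>i\<in>AA n. p i)"
  by (simp add: Sp_def)

lemma set_Sp: "set_mset (Sp n p) \<subseteq> AA n"
  by (auto simp: count_Sp simp flip: count_greater_zero_iff split: if_splits)

lemma cmult_Sp: "cmult n \<sigma> (Sp n p) = (\<Prod>a\<in>AA n. count \<sigma> a choose p a)"
  unfolding cmult_def by (rule prod.cong) (auto simp: count_Sp)

lemma C_of_nat: "lmono (of_nat k * a) 0 = of_nat k * lmono a 0"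
proof -
  have "lmono (of_nat k * a) 0 = lmono (of_nat k) 0 * lmono a 0" by (simp add: lmono_mult)
  also have "lmono (of_nat k) 0 = (of_nat k :: 'a::comm_ring_1 lpoly)" by (simp add: lmono_def)
  finally show ?thesis .
qed

lemma step1:
  fixes v :: "nat \<Rightarrow> 'b::comm_ring_1" and t :: 'b
  assumes cs: "\<And>i. count \<sigma> i \<le> d" and sd: "(\<Sum>i\<in>AA n. count \<sigma> i) = d"
  shows "(\<Prod>i\<in>AA n. (v i + t) ^ count \<sigma> i) =
    (\<Sum>p\<in>PiE (AA n) (\<lambda>_. {..d}). of_nat (\<Prod>a\<in>AA n. count \<sigma> a choose p a) * (\<Prod>i\<in>AA n. v i ^ p i) * t ^ (d - (\<Sum>i\<in>AA n. p i)))"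
proof -
  have b: "(v i + t) ^ count \<sigma> i = (\<Sum>k\<in>{..d}. of_nat (count \<sigma> i choose k) * v i ^ k * t ^ (count \<sigma> i - k))" for i
  proof -
    have "(v i + t) ^ count \<sigma> i = (\<Sum>k\<le>count \<sigma> i. of_nat (count \<sigma> i choose k) * v i ^ k * t ^ (count \<sigma> i - k))"
      by (rule binomial_ring)
    also have "\<dots> = (\<Sum>k\<in>{..d}. of_nat (count \<sigma> i choose k) * v i ^ k * t ^ (count \<sigma> i - k))"
    proof (rule sum.mono_neutral_left)
      show "\<forall>k\<in>{..d} - {..count \<sigma> i}. of_nat (count \<sigma> i choose k) * v i ^ k * t ^ (count \<sigma> i - k) = 0"
        by (auto simp: binomial_eq_0)
    qed (use cs[of i] in auto)
    finally show ?thesis .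
  qed
  have "(\<Prod>i\<in>AA n. (v i + t) ^ count \<sigma> i) = (\<Prod>i\<in>AA n. \<Sum>k\<in>{..d}. of_nat (count \<sigma> i choose k) * v i ^ k * t ^ (count \<sigma> i - k))"
    by (simp add: b)
  also have "\<dots> = (\<Sum>p\<in>PiE (AA n) (\<lambda>_. {..d}). \<Prod>i\<in>AA n. of_nat (count \<sigma> i choose p i) * v i ^ p i * t ^ (count \<sigma> i - p i))"
    by (rule prod_sum_PiE) auto
  also have "\<dots> = (\<Sum>p\<in>PiE (AA n) (\<lambda>_. {..d}). of_nat (\<Prod>a\<in>AA n. count \<sigma> a choose p a) * (\<Prod>i\<in>AA n. v i ^ p i) * t ^ (d - (\<Sum>i\<in>AA n. p i)))"
  proof (rule sum.cong[OF refl])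
    fix p
    have "(\<Prod>i\<in>AA n. of_nat (count \<sigma> i choose p i) * v i ^ p i * t ^ (count \<sigma> i - p i)) =
        of_nat (\<Prod>a\<in>AA n. count \<sigma> a choose p a) * (\<Prod>i\<in>AA n. v i ^ p i) * (\<Prod>i\<in>AA n. t ^ (count \<sigma> i - p i))"
      by (simp add: prod.distrib of_nat_prod)
    also have "of_nat (\<Prod>a\<in>AA n. count \<sigma> a choose p a) * (\<Prod>i\<in>AA n. v i ^ p i) * (\<Prod>i\<in>AA n. t ^ (count \<sigma> i - p i)) =
        of_nat (\<Prod>a\<in>AA n. count \<sigma> a choose p a) * (\<Prod>i\<in>AA n. v i ^ p i) * t ^ (d - (\<Sum>i\<in>AA n. p i))"
    proof (cases "\<forall>i\<in>AA n. p i \<le> count \<sigma> i")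
      case True
      have "(\<Prod>i\<in>AA n. t ^ (count \<sigma> i - p i)) = t ^ (\<Sum>i\<in>AA n. count \<sigma> i - p i)"
        by (simp add: power_sum)
      also have "(\<Sum>i\<in>AA n. count \<sigma> i - p i) = d - (\<Sum>i\<in>AA n. p i)"
        using True sd sum_subtractf_nat[of "AA n" p "count \<sigma>"] by simp
      finally show ?thesis by simp
    next
      case False
      then obtain i where i1: "i \<in> AA n" and i2: "\<not> p i \<le> count \<sigma> i" by blast
      have z: "(\<Prod>a\<in>AA n. count \<sigma> a choose p a) = 0"
        by (intro prod_zero, simp, rule bexI[of _ i]) (use i1 i2 in \<open>auto simp: binomial_eq_0\<close>)
      show ?thesis by (simp only: z of_nat_0 mult_zero_left)
    qed
    finally show "(\<Prod>i\<in>AA n. of_nat (count \<sigma> i choose p i) * v i ^ p i * t ^ (count \<sigma> i - p i)) =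
        of_nat (\<Prod>a\<in>AA n. count \<sigma> a choose p a) * (\<Prod>i\<in>AA n. v i ^ p i) * t ^ (d - (\<Sum>i\<in>AA n. p i))" .
  qed
  finally show ?thesis .
qed



lemma K_val:
  assumes bc: "balanced_complex n d w"
  shows "(\<Sum>\<sigma>\<in>Cplx w. of_nat (cmult n \<sigma> (Sp n p)) * w \<sigma>) =
         (if (\<Sum>i\<in>AA n. p i) = d then w (Sp n p) else 0)"
proof -
  have wc: "weighted_complex n d w" using bc by (simp add: balanced_complex_def)
  let ?s = "\<Sum>i\<in>AA n. p i"
  show ?thesis
  proof (cases "?s < d")
    case True
    then have "balanced_in_degree n w ?s" using bc by (simp add: balanced_complex_def)
    moreover have "size (Sp n p) = ?s" by (simp add: size_Sp)
    moreover have "set_mset (Sp n p) \<subseteq> AA n" by (rule set_Sp)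
    ultimately show ?thesis using True unfolding balanced_in_degree_def by auto
  next
    case False
    have z: "cmult n \<sigma> (Sp n p) = (if \<sigma> = Sp n p then 1 else 0)" if s: "\<sigma> \<in> Cplx w" for \<sigma>
    proof (cases "\<forall>a\<in>AA n. p a \<le> count \<sigma> a")
      case True
      have sd: "(\<Sum>a\<in>AA n. count \<sigma> a) = d" by (rule wc_sum[OF wc s])
      have eq: "\<forall>a\<in>AA n. p a = count \<sigma> a"
      proof (rule ccontr)
        assume "\<not> (\<forall>a\<in>AA n. p a = count \<sigma> a)"
        then have "\<exists>a\<in>AA n. p a < count \<sigma> a" using True by force
        then have "?s < (\<Sum>a\<in>AA n. count \<sigma> a)" using True by (intro sum_strict_mono_ex1) auto
        then show False using False sd by simp
      qed
      have "\<sigma> = Sp n p"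
      proof (rule multiset_eqI)
        fix a show "count \<sigma> a = count (Sp n p) a"
        proof (cases "a \<in> AA n")
          case False
          then have "a \<notin># \<sigma>" using wc_set[OF wc s] by auto
          then show ?thesis using False by (auto simp: count_Sp not_in_iff)
        qed (use eq in \<open>simp add: count_Sp\<close>)
      qed
      then show ?thesis by (simp add: cmult_def)
    next
      case False
      then obtain a where a1: "a \<in> AA n" and a2: "\<not> p a \<le> count \<sigma> a" by blast
      have "cmult n \<sigma> (Sp n p) = 0" unfolding cmult_Sp
        by (intro prod_zero, simp, rule bexI[of _ a]) (use a1 a2 in \<open>auto simp: binomial_eq_0\<close>)
      moreover have "\<sigma> \<noteq> Sp n p"
      proof
        assume "\<sigma> = Sp n p"
        then have "count \<sigma> a = p a" using a1 by (simp add: count_Sp)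
        then show False using a2 by simp
      qed
      ultimately show ?thesis by simp
    qed
    have "(\<Sum>\<sigma>\<in>Cplx w. of_nat (cmult n \<sigma> (Sp n p)) * w \<sigma>) = (\<Sum>\<sigma>\<in>Cplx w. if \<sigma> = Sp n p then w \<sigma> else 0)"
      by (rule sum.cong) (simp_all add: z)
    also have "\<dots> = (if Sp n p \<in> Cplx w then w (Sp n p) else 0)" using wc_fin[OF wc] by simp
    also have "\<dots> = w (Sp n p)" by (simp add: cplx_def)
    finally have K: "(\<Sum>\<sigma>\<in>Cplx w. of_nat (cmult n \<sigma> (Sp n p)) * w \<sigma>) = w (Sp n p)" .
    show ?thesis
    proof (cases "?s = d")
      case True then show ?thesis using K by simp
    next
      case ne: False
      have "Sp n p \<notin> Cplx w" using wc_size[OF wc, of "Sp n p"] ne by (auto simp: size_Sp)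
      then show ?thesis using K ne by (simp add: cplx_def)
    qed
  qed
qed




lemma shift_identity:
  fixes v :: "nat \<Rightarrow> 'a::comm_ring_1 lpoly" and t :: "'a lpoly"
  assumes bc: "balanced_complex n d w"
  shows "(\<Sum>\<sigma>\<in>Cplx w. lmono (w \<sigma>) 0 * (\<Prod>i\<in>AA n. (v i + t) ^ count \<sigma> i)) =
         (\<Sum>p\<in>PiE (AA n) (\<lambda>_. {..d}). lmono (if (\<Sum>i\<in>AA n. p i) = d then w (Sp n p) else 0) 0 * (\<Prod>i\<in>AA n. v i ^ p i))"
proof -
  have wc: "weighted_complex n d w" using bc by (simp add: balanced_complex_def)
  let ?P = "PiE (AA n) (\<lambda>_. {..d})"
  let ?V = "\<lambda>p. \<Prod>i\<in>AA n. v i ^ p i" and ?T = "\<lambda>p. t ^ (d - (\<Sum>i\<in>AA n. p i))"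
  have "(\<Sum>\<sigma>\<in>Cplx w. lmono (w \<sigma>) 0 * (\<Prod>i\<in>AA n. (v i + t) ^ count \<sigma> i)) =
        (\<Sum>\<sigma>\<in>Cplx w. lmono (w \<sigma>) 0 * (\<Sum>p\<in>?P. of_nat (cmult n \<sigma> (Sp n p)) * ?V p * ?T p))"
  proof (rule sum.cong[OF refl])
    fix \<sigma> assume s: "\<sigma> \<in> Cplx w"
    have cs: "count \<sigma> i \<le> d" for i using count_le_size[of \<sigma> i] wc_size[OF wc s] by simp
    show "lmono (w \<sigma>) 0 * (\<Prod>i\<in>AA n. (v i + t) ^ count \<sigma> i) =
        lmono (w \<sigma>) 0 * (\<Sum>p\<in>?P. of_nat (cmult n \<sigma> (Sp n p)) * ?V p * ?T p)"
      unfolding step1[OF cs wc_sum[OF wc s]] cmult_Sp ..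
  qed
  also have "\<dots> = (\<Sum>\<sigma>\<in>Cplx w. \<Sum>p\<in>?P. lmono (of_nat (cmult n \<sigma> (Sp n p)) * w \<sigma>) 0 * (?V p * ?T p))"
    by (simp add: sum_distrib_left C_of_nat mult.assoc mult.left_commute)
  also have "\<dots> = (\<Sum>p\<in>?P. \<Sum>\<sigma>\<in>Cplx w. lmono (of_nat (cmult n \<sigma> (Sp n p)) * w \<sigma>) 0 * (?V p * ?T p))"
    by (rule sum.swap)
  also have "\<dots> = (\<Sum>p\<in>?P. lmono (\<Sum>\<sigma>\<in>Cplx w. of_nat (cmult n \<sigma> (Sp n p)) * w \<sigma>) 0 * (?V p * ?T p))"
    by (rule sum.cong[OF refl]) (simp add: lmono_sum_coeff[symmetric] sum_distrib_right)
  also have "\<dots> = (\<Sum>p\<in>?P. lmono (if (\<Sum>i\<in>AA n. p i) = d then w (Sp n p) else 0) 0 * ?V p)"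
  proof (rule sum.cong[OF refl])
    fix p
    show "lmono (\<Sum>\<sigma>\<in>Cplx w. of_nat (cmult n \<sigma> (Sp n p)) * w \<sigma>) 0 * (?V p * ?T p) =
          lmono (if (\<Sum>i\<in>AA n. p i) = d then w (Sp n p) else 0) 0 * ?V p"
      unfolding K_val[OF bc] by simp
  qed
  finally show ?thesis .
qed

lemma cox_one: "1 \<in> cox_alg n"
  using cox_alg.const[of 1 n] by (simp add: lmono_one)

lemma cox_zero: "0 \<in> cox_alg n"
  using cox_alg.const[of 0 n] by simp

lemma cox_prod: "(\<And>x. x \<in> S \<Longrightarrow> f x \<in> cox_alg n) \<Longrightarrow> prod f S \<in> cox_alg n"
  by (induction S rule: infinite_finite_induct) (auto simp: cox_one intro: cox_alg.mult)

lemma cox_sum: "(\<And>x. x \<in> S \<Longrightarrow> f x \<in> cox_alg n) \<Longrightarrow> sum f S \<in> cox_alg n"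
  by (induction S rule: infinite_finite_induct) (auto simp: cox_zero intro: cox_alg.add)

lemma cox_power: "F \<in> cox_alg n \<Longrightarrow> F ^ k \<in> cox_alg n"
  by (induction k) (auto simp: cox_one intro: cox_alg.mult)

lemma sum_single_const: "(\<Sum>j<k. Poly_Mapping.single v (1::int)) = Poly_Mapping.single v (int k)"
  by (induction k) (auto simp: single_add add.commute)

lemma xpow: "xvar I ^ k = (lmono 1 (Poly_Mapping.single (X I) (int k)) :: 'a::comm_ring_1 lpoly)"
  by (simp add: xvar_def lmono_power sum_single_const)

lemma aexp_cox:
  "(lmono 1 (aexp n w) :: 'a::comm_ring_1 lpoly) \<in> cox_alg n"
proof -
  have "(lmono 1 (aexp n w) :: 'a lpoly) = (\<Prod>I\<in>validIs n. lmono 1 (Poly_Mapping.single (X I) (int (aI (Cplx w) I))))"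
    by (simp add: lmono_prod aexp_def)
  also have "\<dots> = (\<Prod>I\<in>validIs n. xvar I ^ aI (Cplx w) I)" by (simp add: xpow)
  also have "\<dots> \<in> cox_alg n"
    by (rule cox_prod, rule cox_power, rule cox_alg.xgen) (simp add: validIs_def)
  finally show ?thesis .
qed

lemma yzexp_alt: "yzexp n \<sigma> = (\<Sum>i\<in>AA n. \<Sum>j<count \<sigma> i. ea n i)"
proof (rule poly_mapping_eqI)
  fix v
  show "lk (yzexp n \<sigma>) v = lk (\<Sum>i\<in>AA n. \<Sum>j<count \<sigma> i. ea n i) v"
  proof (cases v)
    case (Y a)
    have "lk (\<Sum>i\<in>AA n. \<Sum>j<count \<sigma> i. ea n i) v = (\<Sum>i\<in>AA n. if i = a then int (count \<sigma> i) else 0)"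
      by (rule trans[OF lookup_sum], rule sum.cong) (auto simp: Y lookup_sum)
    also have "\<dots> = (if a \<in> AA n then int (count \<sigma> a) else 0)" by (simp add: sum.delta)
    finally show ?thesis by (simp add: Y)
  next
    case (X J)
    have "lk (\<Sum>i\<in>AA n. \<Sum>j<count \<sigma> i. ea n i) v = (\<Sum>i\<in>AA n. if validI n J \<and> i \<in> J then - int (count \<sigma> i) else 0)"
      by (rule trans[OF lookup_sum], rule sum.cong) (auto simp: X lookup_sum)
    also have "\<dots> = (if validI n J then - int (\<Sum>i\<in>J. count \<sigma> i) else 0)"
    proof (cases "validI n J")
      case True
      have sub: "J \<subseteq> AA n" by (rule validI_sub[OF True])
      have "(\<Sum>i\<in>AA n. if i \<in> J then - int (count \<sigma> i) else 0) = (\<Sum>i\<in>AA n \<inter> J. - int (count \<sigma> i))"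
        by (simp add: sum.inter_restrict)
      also have "AA n \<inter> J = J" using sub by blast
      finally show ?thesis using True by (simp add: sum_negf)
    qed simp
    finally show ?thesis by (simp add: X)
  qed
qed

lemma yzmono: "lmono c (yzexp n \<sigma>) = lmono c 0 * (\<Prod>i\<in>AA n. yz n i ^ count \<sigma> i)"
  by (simp add: yz_ea lmono_power lmono_prod lmono_mult yzexp_alt)

lemma Fcx_cox:
  assumes bc: "balanced_complex n d w" and n: "5 \<le> n"
  shows "Fcx n w \<in> cox_alg n"
proof -
  have one: "1 \<in> AA n" using n by simp
  let ?u = "\<lambda>i. yz n i :: 'a lpoly"
  let ?v = "\<lambda>i. ?u i - ?u 1"
  have "(\<Sum>\<sigma>\<in>Cplx w. lmono (w \<sigma>) (yzexp n \<sigma>)) = (\<Sum>\<sigma>\<in>Cplx w. lmono (w \<sigma>) 0 * (\<Prod>i\<in>AA n. (?v i + ?u 1) ^ count \<sigma> i))"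
    by (simp add: yzmono)
  also have "\<dots> = (\<Sum>\<sigma>\<in>Cplx w. lmono (w \<sigma>) 0 * (\<Prod>i\<in>AA n. (?v i + 0) ^ count \<sigma> i))"
    unfolding shift_identity[OF bc] ..
  also have "\<dots> \<in> cox_alg n"
    by (rule cox_sum, rule cox_alg.mult, rule cox_alg.const, rule cox_prod, rule cox_power, simp)
       (rule cox_alg.ygen, auto simp: one)
  finally have f: "(\<Sum>\<sigma>\<in>Cplx w. lmono (w \<sigma>) (yzexp n \<sigma>)) \<in> cox_alg n" .
  show ?thesis unfolding Fcx_def aexp_def[symmetric]
    by (rule cox_alg.mult[OF aexp_cox f])
qed




lemma lin_zero_fun: "lin (\<lambda>m. 0) F = 0" by (simp add: lin_def)

lemma Fcx_inP:
  assumes wc: "weighted_complex n d w"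
  shows "in_P (Fcx n w)"
  unfolding in_P_def
proof (intro ballI allI)
  fix m v assume "m \<in> Poly_Mapping.keys (Fcx n w)"
  then obtain \<sigma> where s: "\<sigma> \<in> Cplx w" and m: "m = Eexp n w \<sigma>" using keys_Fcx by blast
  show "0 \<le> lk m v"
  proof (cases v)
    case (X J)
    have "(\<Sum>i\<in>J. count \<sigma> i) \<le> aI (Cplx w) J" by (rule aI_ge[OF wc_fin[OF wc] s])
    then show ?thesis by (simp add: X m flip: of_nat_sum)
  qed (simp add: m)
qed

lemma Fcx_nonzero:
  assumes wc: "weighted_complex n d w"
  shows "Fcx n w \<noteq> 0"
proof -
  obtain \<sigma> where s: "\<sigma> \<in> Cplx w" using wc unfolding weighted_complex_def by blast
  have "Poly_Mapping.lookup (Fcx n w) (Eexp n w \<sigma>) = w \<sigma>" by (rule lookup_Fcx[OF wc s])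
  moreover have "w \<sigma> \<noteq> 0" using s by (simp add: cplx_def)
  ultimately show ?thesis by auto
qed

lemma Fcx_notdiv:
  assumes wc: "weighted_complex n d w"
  shows "\<not> divisible_by_exceptional n (Fcx n w)"
proof
  assume "divisible_by_exceptional n (Fcx n w)"
  then obtain I G where v: "validI n I" and G: "G \<in> Cox n" and eq: "Fcx n w = xvar I * G"
    unfolding divisible_by_exceptional_def by blast
  have ne: "Cplx w \<noteq> {}" using wc by (simp add: weighted_complex_def)
  obtain \<sigma>0 where s0: "\<sigma>0 \<in> Cplx w" and at: "(\<Sum>i\<in>I. count \<sigma>0 i) = aI (Cplx w) I"
    using aI_attained[OF wc_fin[OF wc] ne] by blast
  let ?m0 = "Eexp n w \<sigma>0"
  have l0: "lk ?m0 (X I) = 0" using v at by simp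
  have "Poly_Mapping.lookup (Fcx n w) ?m0 = w \<sigma>0" by (rule lookup_Fcx[OF wc s0])
  moreover have "w \<sigma>0 \<noteq> 0" using s0 by (simp add: cplx_def)
  moreover have "Poly_Mapping.lookup (xvar I * G) ?m0 = 0"
  proof -
    let ?e = "Poly_Mapping.single (X I) (1::int)"
    have "Poly_Mapping.lookup (xvar I * G) ?m0 = lin (\<lambda>m. if m = ?m0 then 1 else 0) (lmono 1 ?e * G)"
      by (simp add: lin_ind xvar_def)
    also have "\<dots> = lin (\<lambda>m. if ?e + m = ?m0 then 1 else 0) G" by (simp add: lin_lmono_mult)
    also have "\<dots> = lin (\<lambda>m. 0) G"
    proof (rule lin_cong)
      fix m assume "m \<in> Poly_Mapping.keys G"
      then have "0 \<le> lk m (X I)" using G by (simp add: Cox_def in_P_def)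
      then have "lk (?e + m) (X I) \<noteq> lk ?m0 (X I)" using l0 by (simp add: lookup_add)
      then show "(if ?e + m = ?m0 then 1 else 0) = 0" by auto
    qed
    finally show ?thesis by (simp add: lin_zero_fun)
  qed
  ultimately show False using eq by simp
qed

definition Yprof :: "nat \<Rightarrow> (var \<Rightarrow>\<^sub>0 int) \<Rightarrow> nat multiset \<Rightarrow> bool" where
  "Yprof n m \<sigma> \<longleftrightarrow> (\<forall>a. lk m (Y a) = (if a \<in> AA n then int (count \<sigma> a) else 0))"

lemma Fcx_extract:
  assumes wc: "weighted_complex n d w" and s: "set_mset \<sigma> \<subseteq> AA n"
  shows "lin (\<lambda>m. if Yprof n m \<sigma> then 1 else 0) (Fcx n w) = w \<sigma>"
proof -
  have "lin (\<lambda>m. if Yprof n m \<sigma> then 1 else 0) (Fcx n w) = (\<Sum>\<tau>\<in>Cplx w. w \<tau> * (if Yprof n (Eexp n w \<tau>) \<sigma> then 1 else 0))"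
    by (simp add: Fcx_expand lin_sum lin_lmono)
  also have "\<dots> = (\<Sum>\<tau>\<in>Cplx w. if \<tau> = \<sigma> then w \<tau> else 0)"
  proof (rule sum.cong[OF refl])
    fix \<tau> assume t: "\<tau> \<in> Cplx w"
    have "Yprof n (Eexp n w \<tau>) \<sigma> \<longleftrightarrow> \<tau> = \<sigma>"
    proof
      assume y: "Yprof n (Eexp n w \<tau>) \<sigma>"
      show "\<tau> = \<sigma>"
      proof (rule multiset_eqI)
        fix a show "count \<tau> a = count \<sigma> a"
        proof (cases "a \<in> AA n")
          case True
          have "lk (Eexp n w \<tau>) (Y a) = (if a \<in> AA n then int (count \<sigma> a) else 0)"
            using y unfolding Yprof_def by blast
          then show ?thesis using True by simp
        next
          case False
          then have "a \<notin># \<tau>" "a \<notin># \<sigma>" using wc_set[OF wc t] s by auto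
          then show ?thesis by (simp add: not_in_iff)
        qed
      qed
    qed (simp add: Yprof_def)
    then show "w \<tau> * (if Yprof n (Eexp n w \<tau>) \<sigma> then 1 else 0) = (if \<tau> = \<sigma> then w \<tau> else 0)" by simp
  qed
  also have "\<dots> = (if \<sigma> \<in> Cplx w then w \<sigma> else 0)" using wc_fin[OF wc] by simp
  also have "\<dots> = w \<sigma>" by (simp add: cplx_def)
  finally show ?thesis .
qed

lemma Fcx_inj:
  assumes w1: "weighted_complex n d w1" and w2: "weighted_complex n d w2" and eq: "Fcx n w1 = Fcx n w2"
  shows "w1 = w2"
proof
  fix \<sigma>
  show "w1 \<sigma> = w2 \<sigma>"
  proof (cases "\<sigma> \<in> Cplx w1 \<union> Cplx w2")
    case True
    then have s: "set_mset \<sigma> \<subseteq> AA n" using wc_set[OF w1] wc_set[OF w2] by blast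
    show ?thesis using Fcx_extract[OF w1 s] Fcx_extract[OF w2 s] eq by simp
  next
    case False then show ?thesis by (simp add: cplx_def)
  qed
qed




lemma surj_Fcx:
  assumes n: "5 \<le> n" and d: "1 \<le> d"
    and FC: "F \<in> Cox n" and F0: "F \<noteq> 0" and hd: "homogeneous_deg n d F"
    and nd: "\<not> divisible_by_exceptional n F"
  shows "\<exists>w. balanced_complex n d w \<and> Fcx n w = F"
proof -
  obtain D where hD: "homogeneous_of_class n D F" and fD: "fst D = int d"
    using hd unfolding homogeneous_deg_def by blast
  have pic: "pic_class n m = D" if "m \<in> Poly_Mapping.keys F" for m
    using hD that unfolding homogeneous_of_class_def by blast
  have Fcox: "F \<in> cox_alg n" and FP: "in_P F" using FC by (auto simp: Cox_def)
  have gd: "good n F" by (rule good_gspan[OF cox_gspan[OF Fcox]])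
  have sh: "shape n m" if "m \<in> Poly_Mapping.keys F" for m using gd that unfolding good_def by blast
  have B0: "lin (hB n c S k) F = 0" if "1 \<le> k" for c S k using gd that unfolding good_def by blast
  define c0 where "c0 = (\<lambda>I. if validI n I then snd D I + int d else 0)"
  have ysumd: "(\<Sum>i\<in>AA n. lk m (Y i)) = int d" if m: "m \<in> Poly_Mapping.keys F" for m
    using pic[OF m] fD by (simp add: pic_class_def prod_eq_iff)
  have cv: "cvec n m = c0" if m: "m \<in> Poly_Mapping.keys F" for m
  proof
    fix I show "cvec n m I = c0 I"
    proof (cases "validI n I")
      case True
      have "snd (pic_class n m) I = snd D I" using pic[OF m] by simp
      then have e1: "lk m (X I) - (\<Sum>i\<in>AA n - I. lk m (Y i)) = snd D I"
        using True by (simp add: pic_class_def)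
      have "(\<Sum>i\<in>AA n. lk m (Y i)) = (\<Sum>i\<in>I. lk m (Y i)) + (\<Sum>i\<in>AA n - I. lk m (Y i))"
        using validI_sub[OF True] by (metis finite_atLeastAtMost sum.subset_diff add.commute)
      then show ?thesis using e1 ysumd[OF m] True by (simp add: cvec_def c0_def)
    qed (simp add: cvec_def c0_def)
  qed
  define sg where "sg = (\<lambda>m. Sp n (\<lambda>i. nat (lk m (Y i))))"
  define mexp where "mexp = (\<lambda>\<sigma>. (\<Sum>I\<in>validIs n. Poly_Mapping.single (X I) (c0 I)) + yzexp n \<sigma>)"
  have lk_mexp_Y: "lk (mexp \<sigma>) (Y a) = (if a \<in> AA n then int (count \<sigma> a) else 0)" for \<sigma> a
    by (simp add: mexp_def lookup_add lk_sum_single_X)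
  have lk_mexp_X: "lk (mexp \<sigma>) (X J) = (if validI n J then c0 J - int (\<Sum>i\<in>J. count \<sigma> i) else 0)" for \<sigma> J
    by (simp add: mexp_def lookup_add lk_sum_single_X)
  have cnt_sg: "count (sg m) a = (if a \<in> AA n then nat (lk m (Y a)) else 0)" for m a
    by (simp add: sg_def count_Sp)
  have set_sg: "set_mset (sg m) \<subseteq> AA n" for m unfolding sg_def by (rule set_Sp)
  have R1: "mexp (sg m) = m" if m: "m \<in> Poly_Mapping.keys F" for m
  proof (rule poly_mapping_eqI)
    fix v
    have s: "shape n m" by (rule sh[OF m])
    show "lk (mexp (sg m)) v = lk m v"
    proof (cases v)
      case (Y a)
      then show ?thesis using s by (auto simp: lk_mexp_Y cnt_sg shape_def)
    next
      case (X J)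
      show ?thesis
      proof (cases "validI n J")
        case True
        have "(\<Sum>i\<in>J. count (sg m) i) = (\<Sum>i\<in>J. nat (lk m (Y i)))"
          by (rule sum.cong) (use validI_sub[OF True] in \<open>auto simp: cnt_sg\<close>)
        then have "int (\<Sum>i\<in>J. count (sg m) i) = (\<Sum>i\<in>J. lk m (Y i))"
          using s by (simp add: shape_def)
        moreover have "cvec n m J = c0 J" using cv[OF m] by simp
        ultimately show ?thesis using True by (simp add: X lk_mexp_X cvec_def)
      next
        case False then show ?thesis using s by (simp add: X lk_mexp_X shape_def)
      qed
    qed
  qed
  have R2: "sg (mexp \<sigma>) = \<sigma>" if s: "set_mset \<sigma> \<subseteq> AA n" for \<sigma>
  proof (rule multiset_eqI)
    fix a show "count (sg (mexp \<sigma>)) a = count \<sigma> a"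
    proof (cases "a \<in> AA n")
      case False
      then have "a \<notin># \<sigma>" using s by auto
      then show ?thesis using False by (auto simp: cnt_sg not_in_iff)
    qed (simp add: cnt_sg lk_mexp_Y)
  qed
  define w where "w = (\<lambda>\<sigma>. if set_mset \<sigma> \<subseteq> AA n then Poly_Mapping.lookup F (mexp \<sigma>) else 0)"
  have wsg: "w (sg m) = Poly_Mapping.lookup F m" if m: "m \<in> Poly_Mapping.keys F" for m
    using set_sg R1[OF m] by (simp add: w_def)
  have CW: "Cplx w = sg ` Poly_Mapping.keys F"
  proof
    show "Cplx w \<subseteq> sg ` Poly_Mapping.keys F"
    proof
      fix \<sigma> assume "\<sigma> \<in> Cplx w"
      then have s: "set_mset \<sigma> \<subseteq> AA n" and k: "mexp \<sigma> \<in> Poly_Mapping.keys F"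
        by (auto simp: cplx_def w_def in_keys_iff split: if_splits)
      then show "\<sigma> \<in> sg ` Poly_Mapping.keys F" using R2[OF s] by (metis image_eqI)
    qed
  next
    show "sg ` Poly_Mapping.keys F \<subseteq> Cplx w"
      using wsg by (auto simp: cplx_def in_keys_iff)
  qed
  have inj: "inj_on sg (Poly_Mapping.keys F)" by (rule inj_on_inverseI[where g = mexp]) (rule R1)
  have sz: "size (sg m) = d" if m: "m \<in> Poly_Mapping.keys F" for m
  proof -
    have "size (sg m) = (\<Sum>i\<in>AA n. nat (lk m (Y i)))" by (simp add: sg_def size_Sp)
    moreover have "int (\<Sum>i\<in>AA n. nat (lk m (Y i))) = (\<Sum>i\<in>AA n. int (nat (lk m (Y i))))"
      by (rule of_nat_sum)
    moreover have "\<dots> = (\<Sum>i\<in>AA n. lk m (Y i))"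
      by (rule sum.cong) (use sh[OF m] in \<open>auto simp: shape_def\<close>)
    ultimately have "int (size (sg m)) = int d" using ysumd[OF m] by simp
    then show ?thesis by simp
  qed
  have wc: "weighted_complex n d w"
    unfolding weighted_complex_def using F0 CW sz set_sg by auto
  have bal: "balanced_in_degree n w j" if j: "j < d" for j
    unfolding balanced_in_degree_def
  proof (intro allI impI)
    fix S :: "nat multiset" assume S: "size S = j \<and> set_mset S \<subseteq> AA n"
    have "(\<Sum>\<sigma>\<in>Cplx w. of_nat (cmult n \<sigma> S) * w \<sigma>) = (\<Sum>m\<in>Poly_Mapping.keys F. of_nat (cmult n (sg m) S) * w (sg m))"
      unfolding CW by (simp add: sum.reindex[OF inj])
    also have "\<dots> = lin (hB n c0 S (d - j)) F"
      unfolding lin_def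
    proof (rule sum.cong[OF refl])
      fix m assume m: "m \<in> Poly_Mapping.keys F"
      have "ysum n m = int (size S) + int (d - j)" using ysumd[OF m] S j by (simp add: ysum_def)
      then have h1: "hB n c0 S (d - j) m = of_nat (\<Prod>a\<in>AA n. nat (lk m (Y a)) choose count S a)"
        using cv[OF m] by (simp add: hB_def)
      have h2: "cmult n (sg m) S = (\<Prod>a\<in>AA n. nat (lk m (Y a)) choose count S a)"
        unfolding cmult_def by (rule prod.cong) (auto simp: cnt_sg)
      show "of_nat (cmult n (sg m) S) * w (sg m) = Poly_Mapping.lookup F m * hB n c0 S (d - j) m"
        by (simp only: h1 h2 wsg[OF m]) (rule mult.commute)
    qed
    also have "\<dots> = 0" using j by (intro B0) simp
    finally show "(\<Sum>\<sigma>\<in>Cplx w. of_nat (cmult n \<sigma> S) * w \<sigma>) = 0" .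
  qed
  have bc: "balanced_complex n d w" using wc bal by (simp add: balanced_complex_def)
  have lkX: "lk m (X I) = c0 I - int (\<Sum>i\<in>I. count (sg m) i)" if m: "m \<in> Poly_Mapping.keys F" and v: "validI n I" for m I
    using lk_mexp_X[of "sg m" I] R1[OF m] v by simp
  have le: "int (\<Sum>i\<in>I. count (sg m) i) \<le> int (aI (Cplx w) I)" if m: "m \<in> Poly_Mapping.keys F" for m I
  proof -
    have "(\<Sum>i\<in>I. count (sg m) i) \<le> aI (Cplx w) I" using aI_ge[OF wc_fin[OF wc], of "sg m" I] m CW by blast
    then show ?thesis by (simp only: of_nat_le_iff)
  qed
  have aeq: "int (aI (Cplx w) I) = c0 I" if v: "validI n I" for I
  proof -
    have ne: "Cplx w \<noteq> {}" using wc by (simp add: weighted_complex_def)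
    obtain \<sigma> where s: "\<sigma> \<in> Cplx w" and at: "(\<Sum>i\<in>I. count \<sigma> i) = aI (Cplx w) I"
      using aI_attained[OF wc_fin[OF wc] ne] by blast
    obtain m where m: "m \<in> Poly_Mapping.keys F" and sm: "\<sigma> = sg m" using s CW by blast
    have "0 \<le> lk m (X I)" using FP m by (simp add: in_P_def)
    moreover have "int (aI (Cplx w) I) = int (\<Sum>i\<in>I. count (sg m) i)" using at sm by simp
    ultimately have ge: "int (aI (Cplx w) I) \<le> c0 I" using lkX[OF m v] by linarith
    show ?thesis
    proof (rule ccontr)
      assume "int (aI (Cplx w) I) \<noteq> c0 I"
      then have lt: "int (aI (Cplx w) I) < c0 I" using ge by simp
      let ?G = "xinv I * F"
      have xx: "xvar I * xinv I = (1 :: 'a lpoly)"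
        by (simp add: xvar_def xinv_def lmono_mult lmono_one flip: single_add)
      have FG: "F = xvar I * ?G" by (simp add: mult.assoc[symmetric] xx)
      have Gc: "?G \<in> cox_alg n" by (rule cox_alg.mult[OF cox_alg.xinvgen[OF v] Fcox])
      have GP: "in_P ?G"
        unfolding in_P_def
      proof (intro ballI allI)
        fix m' u assume "m' \<in> Poly_Mapping.keys ?G"
        then obtain m where m: "m \<in> Poly_Mapping.keys F" and m': "m' = Poly_Mapping.single (X I) (-1) + m"
          using keys_lmono_mult[of 1 "Poly_Mapping.single (X I) (-1)" F] unfolding xinv_def by blast
        show "0 \<le> lk m' u"
        proof (cases "u = X I")
          case True
          have "0 \<le> lk m (X I) - 1" using lkX[OF m v] le[OF m, of I] lt by linarith
          then show ?thesis using True by (simp add: m' lookup_add)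
        next
          case False
          then show ?thesis using FP m by (simp add: m' lookup_add lk_single in_P_def)
        qed
      qed
      have "divisible_by_exceptional n F"
        unfolding divisible_by_exceptional_def using v Gc GP FG by (auto simp: Cox_def)
      then show False using nd by simp
    qed
  qed
  have Eq: "Eexp n w \<sigma> = mexp \<sigma>" for \<sigma>
  proof -
    have "aexp n w = (\<Sum>I\<in>validIs n. Poly_Mapping.single (X I) (c0 I))"
      unfolding aexp_def by (rule sum.cong) (auto simp: validIs_def aeq)
    then show ?thesis by (simp add: Eexp_def mexp_def)
  qed
  have "Fcx n w = (\<Sum>\<sigma>\<in>Cplx w. lmono (w \<sigma>) (mexp \<sigma>))" by (simp add: Fcx_expand Eq)
  also have "\<dots> = (\<Sum>m\<in>Poly_Mapping.keys F. lmono (w (sg m)) (mexp (sg m)))"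
    unfolding CW by (simp add: sum.reindex[OF inj])
  also have "\<dots> = (\<Sum>m\<in>Poly_Mapping.keys F. lmono (Poly_Mapping.lookup F m) m)"
    by (rule sum.cong) (simp_all add: wsg R1)
  also have "\<dots> = F" by (rule lpoly_expand[symmetric])
  finally show ?thesis using bc by blast
qed

theorem mainTheorem2:
  fixes n d :: nat
  assumes "5 \<le> n" and "1 \<le> d"
  shows "bij_betw (Fcx n)
           {w :: nat multiset \<Rightarrow> 'a::comm_ring_1. balanced_complex n d w}
           {F. F \<in> Cox n \<and> F \<noteq> 0 \<and> homogeneous_deg n d F \<and> \<not> divisible_by_exceptional n F}
       \<and> (\<forall>w :: nat multiset \<Rightarrow> 'a. balanced_complex n d w \<longrightarrow>
            homogeneous_of_class n (D_class n d (Cplx w)) (Fcx n w))"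
proof
  have wcb: "weighted_complex n d w" if "balanced_complex n d w" for w :: "nat multiset \<Rightarrow> 'a"
    using that by (simp add: balanced_complex_def)
  show "\<forall>w :: nat multiset \<Rightarrow> 'a. balanced_complex n d w \<longrightarrow>
            homogeneous_of_class n (D_class n d (Cplx w)) (Fcx n w)"
    using homog_Fcx wcb by blast
  show "bij_betw (Fcx n)
           {w :: nat multiset \<Rightarrow> 'a::comm_ring_1. balanced_complex n d w}
           {F. F \<in> Cox n \<and> F \<noteq> 0 \<and> homogeneous_deg n d F \<and> \<not> divisible_by_exceptional n F}"
    unfolding bij_betw_def
  proof (intro conjI)
    show "inj_on (Fcx n) {w :: nat multiset \<Rightarrow> 'a. balanced_complex n d w}"
      by (rule inj_onI) (use Fcx_inj wcb in blast)
    show "Fcx n ` {w :: nat multiset \<Rightarrow> 'a. balanced_complex n d w} =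
          {F. F \<in> Cox n \<and> F \<noteq> 0 \<and> homogeneous_deg n d F \<and> \<not> divisible_by_exceptional n F}"
    proof
      show "Fcx n ` {w :: nat multiset \<Rightarrow> 'a. balanced_complex n d w} \<subseteq>
          {F. F \<in> Cox n \<and> F \<noteq> 0 \<and> homogeneous_deg n d F \<and> \<not> divisible_by_exceptional n F}"
      proof (rule image_subsetI, simp only: mem_Collect_eq)
        fix w :: "nat multiset \<Rightarrow> 'a" assume bc: "balanced_complex n d w"
        have wc: "weighted_complex n d w" by (rule wcb[OF bc])
        have "Fcx n w \<in> Cox n" using Fcx_cox[OF bc assms(1)] Fcx_inP[OF wc] by (simp add: Cox_def)
        moreover have "homogeneous_deg n d (Fcx n w)"
          unfolding homogeneous_deg_def using homog_Fcx[OF wc] by (auto simp: D_class_def)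
        ultimately show "Fcx n w \<in> Cox n \<and> Fcx n w \<noteq> 0 \<and> homogeneous_deg n d (Fcx n w) \<and> \<not> divisible_by_exceptional n (Fcx n w)"
          using Fcx_nonzero[OF wc] Fcx_notdiv[OF wc] by blast
      qed
      show "{F. F \<in> Cox n \<and> F \<noteq> 0 \<and> homogeneous_deg n d F \<and> \<not> divisible_by_exceptional n F} \<subseteq>
          Fcx n ` {w :: nat multiset \<Rightarrow> 'a. balanced_complex n d w}"
      proof
        fix F :: "'a lpoly"
        assume "F \<in> {F. F \<in> Cox n \<and> F \<noteq> 0 \<and> homogeneous_deg n d F \<and> \<not> divisible_by_exceptional n F}"
        then obtain w where "balanced_complex n d w" "Fcx n w = F"
          using surj_Fcx[OF assms] by blast
        then show "F \<in> Fcx n ` {w. balanced_complex n d w}" by blast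
      qed
    qed
  qed
qed


end
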